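(* Consider the setting described in the context and assume $D>2$. For $t\ge 1$ define $\mathcal{I}_0(t)=\bigcup_{m=0}^{t-1}\mathcal{F}_0(m)$, $\mathcal{I}_1(t)=\Big(\bigcup_{m=0}^{t-1}\mathcal{F}_{D-1}(m)\Big)\setminus \mathcal{I}_0(t)$ and $\mathcal{I}_2(t)=V\setminus(\mathcal{I}_0(t)\cup\mathcal{I}_1(t))$. Then for every $t\ge1$, $$\sum_{i\in\mathcal{I}_0(t)}\ \sum_{j\in C_i(t)\cap\mathcal{I}_2(t)} a_j(t-1)\le N.$$
   Context: $G=(V,E)$ is a finite connected undirected graph with node set $V=\{0,\dots,N-1\}$; $\mathcal{N}(i)$ denotes the set of neighbours of $i$. Every edge has length $1$, $d_{ij}$ is the hop distance between $i$ and $j$, and $\mathcal{F}_k(m)=\{i\in V : d_{ik}=m\}$. Every node carries value $v_i=1$. The source set is $S(t)=\{D-1\}$ for $t\le 0$ and $S(t)=\{0\}$ for $t\ge 1$. The integer $D$ satisfies $\max_{i\in V}d_{i0}=D-1$, and nodes are labelled so that $0,1,\dots,D-1$ is a path in which node $i$ is a neighbour of $i+1$ with $d_{0,i}=i$ for $0\le i\le D-1$. The algorithm updates, for $t\ge1$: $\hat d_i(t)=0$ if $i\in S(t)$, and $\hat d_i(t)=\min_{j\in\mathcal{N}(i)}\{\hat d_j(t-1)+1\}$ otherwise; $c_i(t)=i$ if $i\in S(t)$, and otherwise $c_i(t)$ is a minimizer $j\in\mathcal{N}(i)$ of $\hat d_j(t-1)+1$; $C_i(t)=\{j : c_j(t-1)=i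 \text{ and } \hat d_j(t-1)=\hat d_i(t)+1\}$; $a_i(t)=\sum_{j\in C_i(t)}a_j(t-1)+v_i$. Initial values $(\hat d_i(0),c_i(0),a_i(0))$ are steady-state values of these recursions when the source set is constantly $\{D-1\}$; in particular $\hat d_i(0)=m$ for all $i\in\mathcal{F}_{D-1}(m)$, and for every integer $m$, $\sum_{i\in\mathcal{F}_{D-1}(m)}a_i(0)\le N$. *)

theory Defs
  imports Main
begin

text \<open>Graphs: node set V = {0..<N} (nodes are naturals), undirected simple graph given by a
 symmetric irreflexive adjacency relation E on V.\<close>

definition nbrs :: "(nat \<Rightarrow> nat \<Rightarrow> bool) \<Rightarrow> nat \<Rightarrow> nat set" where
  "nbrs E i = {j. E i j}"

definition walk :: "(nat \<Rightarrow> nat \<Rightarrow> bool) \<Rightarrow> nat \<Rightarrow> nat \<Rightarrow> nat \<Rightarrow> bool" where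
  "walk E i j n \<longleftrightarrow> (\<exists>p :: nat \<Rightarrow> nat. p 0 = i \<and> p n = j \<and> (\<forall>k<n. E (p k) (p (Suc k))))"

definition hopdist :: "(nat \<Rightarrow> nat \<Rightarrow> bool) \<Rightarrow> nat \<Rightarrow> nat \<Rightarrow> nat" where
  "hopdist E i j = (LEAST n. walk E i j n)"

definition undirected_graph :: "nat \<Rightarrow> (nat \<Rightarrow> nat \<Rightarrow> bool) \<Rightarrow> bool" where
  "undirected_graph N E \<longleftrightarrow>
     (\<forall>i j. E i j \<longrightarrow> i < N \<and> j < N) \<and> (\<forall>i j. E i j \<longrightarrow> E j i) \<and> (\<forall>i. \<not> E i i)"

definition connected_graph :: "nat \<Rightarrow> (nat \<Rightarrow> nat \<Rightarrow> bool) \<Rightarrow> bool" where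
  "connected_graph N E \<longleftrightarrow> (\<forall>i<N. \<forall>j<N. \<exists>n. walk E i j n)"

definition level :: "nat \<Rightarrow> (nat \<Rightarrow> nat \<Rightarrow> bool) \<Rightarrow> nat \<Rightarrow> nat \<Rightarrow> nat set" where
  "level N E k m = {i. i < N \<and> hopdist E i k = m}"

text \<open>Source set: S(t) = {D-1} for t \<le> 0 (i.e. t = 0), S(t) = {0} for t \<ge> 1.\<close>
definition src :: "nat \<Rightarrow> nat \<Rightarrow> nat set" where
  "src D t = (if t = 0 then {D - 1} else {0})"

definition children :: "nat \<Rightarrow> (nat \<Rightarrow> nat \<Rightarrow> nat) \<Rightarrow> (nat \<Rightarrow> nat \<Rightarrow> nat) \<Rightarrow> nat \<Rightarrow> nat \<Rightarrow> nat set" where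
  "children N dh c t i = {j. j < N \<and> c (t - 1) j = i \<and> dh (t - 1) j = dh t i + 1}"

definition I0 :: "nat \<Rightarrow> (nat \<Rightarrow> nat \<Rightarrow> bool) \<Rightarrow> nat \<Rightarrow> nat set" where
  "I0 N E t = (\<Union>m<t. level N E 0 m)"

definition I1 :: "nat \<Rightarrow> (nat \<Rightarrow> nat \<Rightarrow> bool) \<Rightarrow> nat \<Rightarrow> nat \<Rightarrow> nat set" where
  "I1 N E D t = (\<Union>m<t. level N E (D - 1) m) - I0 N E t"

definition I2 :: "nat \<Rightarrow> (nat \<Rightarrow> nat \<Rightarrow> bool) \<Rightarrow> nat \<Rightarrow> nat \<Rightarrow> nat set" where
  "I2 N E D t = {..<N} - (I0 N E t \<union> I1 N E D t)"

end

theory Submission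
  imports Defs
begin

lemma walk_hopdist:
  assumes "connected_graph N E" "x < N" "z < N"
  shows "walk E x z (hopdist E x z)"
proof -
  from assms obtain n where "walk E x z n" unfolding connected_graph_def by blast
  then show ?thesis unfolding hopdist_def by (rule LeastI)
qed

lemma hopdist_le: "walk E x z n \<Longrightarrow> hopdist E x z \<le> n"
  unfolding hopdist_def by (rule Least_le)

lemma hopdist_self: "hopdist E z z = 0"
proof -
  have "walk E z z 0" unfolding walk_def by (rule exI[of _ "\<lambda>_. z"]) simp
  then show ?thesis using hopdist_le by fastforce
qed

lemma hopdist_zero:
  assumes "connected_graph N E" "x < N" "z < N" "hopdist E x z = 0"
  shows "x = z"
  using walk_hopdist[OF assms(1-3)] assms(4) unfolding walk_def by auto

lemma hopdist_Suc:
  assumes "connected_graph N E" "x < N" "z < N" "hopdist E x z = Suc n"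
  shows "\<exists>y. E x y \<and> hopdist E y z \<le> n"
proof -
  from walk_hopdist[OF assms(1-3)] assms(4) obtain p where
    p: "p 0 = x" "p (Suc n) = z" "\<forall>k<Suc n. E (p k) (p (Suc k))"
    unfolding walk_def by auto
  have "walk E (p 1) z n" unfolding walk_def using p
    by (intro exI[of _ "\<lambda>k. p (Suc k)"]) auto
  hence "hopdist E (p 1) z \<le> n" by (rule hopdist_le)
  moreover have "E x (p 1)" using p by force
  ultimately show ?thesis by blast
qed

lemma hopdist_nbr:
  assumes "undirected_graph N E" "connected_graph N E" "E x y" "z < N"
  shows "hopdist E x z \<le> hopdist E y z + 1"
proof -
  have "y < N" using assms(1,3) unfolding undirected_graph_def by blast
  from walk_hopdist[OF assms(2) this assms(4)] obtain q where
    q: "q 0 = y" "q (hopdist E y z) = z" "\<forall>k<hopdist E y z. E (q k) (q (Suc k))"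
    unfolding walk_def by auto
  define p where "p = (\<lambda>k. case k of 0 \<Rightarrow> x | Suc k' \<Rightarrow> q k')"
  have "walk E x z (Suc (hopdist E y z))" unfolding walk_def
  proof (intro exI[of _ p] conjI allI impI)
    show "p 0 = x" by (simp add: p_def)
    show "p (Suc (hopdist E y z)) = z" using q by (simp add: p_def)
    fix k assume "k < Suc (hopdist E y z)"
    then show "E (p k) (p (Suc k))" using q assms(3) by (cases k) (auto simp: p_def)
  qed
  then show ?thesis using hopdist_le by fastforce
qed

lemma walk_concat:
  assumes "walk E x y n" "walk E y z m" shows "walk E x z (n + m)"
proof -
  from assms obtain p q where p: "p 0 = x" "p n = y" "\<forall>k<n. E (p k) (p (Suc k))"
    and q: "q 0 = y" "q m = z" "\<forall>k<m. E (q k) (q (Suc k))" unfolding walk_def by blast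
  define r where "r = (\<lambda>k. if k \<le> n then p k else q (k - n))"
  show ?thesis unfolding walk_def
  proof (intro exI[of _ r] conjI allI impI)
    show "r 0 = x" using p by (simp add: r_def)
    show "r (n+m) = z" using p q by (auto simp: r_def)
    fix k assume k: "k < n + m"
    show "E (r k) (r (Suc k))"
    proof (cases "k < n")
      case True then show ?thesis using p by (simp add: r_def)
    next
      case False
      then have "k - n < m" "Suc k - n = Suc (k - n)" using k by auto
      then show ?thesis using q p False by (auto simp: r_def)
    qed
  qed
qed

lemma sum_UN_children:
  assumes "finite X"
  shows "(\<Sum>k\<in>X. sum h {j. j < (N::nat) \<and> cc j = k \<and> P k j})
       = sum h (\<Union>k\<in>X. {j. j < N \<and> cc j = k \<and> P k j})"
  by (rule sum.UNION_disjoint[symmetric]) (use assms in auto)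

lemma card_step:
  assumes "X \<subseteq> {k. k < (N::nat) \<and> g k = d}"
  shows "card X + card {k. k < N \<and> Suc d \<le> g k} \<le> card {k. k < N \<and> d \<le> (g k::nat)}"
proof -
  have f1: "finite X" using assms by (rule finite_subset) auto
  have f2: "finite {k. k < N \<and> Suc d \<le> g k}" by simp
  have "card X + card {k. k<N \<and> Suc d \<le> g k} = card (X \<union> {k. k<N \<and> Suc d \<le> g k})"
    by (rule card_Un_disjoint[symmetric]) (use assms f1 f2 in auto)
  also have "\<dots> \<le> card {k. k<N \<and> d \<le> g k}" by (rule card_mono) (use assms in auto)
  finally show ?thesis .
qed

lemma sum_children:
  assumes "finite X" "\<And>k. k \<in> X \<Longrightarrow> f k = (\<Sum>j\<in>{j. j < (N::nat) \<and> cc j = k \<and> P k j}. h j) + (1::nat)"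
  shows "sum f X = card X + sum h (\<Union>k\<in>X. {j. j < N \<and> cc j = k \<and> P k j})"
proof -
  have "sum f X = (\<Sum>k\<in>X. (\<Sum>j\<in>{j. j < N \<and> cc j = k \<and> P k j}. h j) + 1)"
    using assms(2) by (rule sum.cong[OF refl])
  also have "\<dots> = (\<Sum>k\<in>X. (\<Sum>j\<in>{j. j < N \<and> cc j = k \<and> P k j}. h j)) + card X"
    unfolding sum.distrib by simp
  also have "\<dots> = card X + sum h (\<Union>k\<in>X. {j. j < N \<and> cc j = k \<and> P k j})"
    using sum_UN_children[OF assms(1)] by simp
  finally show ?thesis .
qed


theorem lemma4:
  fixes N D :: nat
    and E :: "nat \<Rightarrow> nat \<Rightarrow> bool"
    and dh :: "nat \<Rightarrow> nat \<Rightarrow> nat"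
    and c :: "nat \<Rightarrow> nat \<Rightarrow> nat"
    and a :: "nat \<Rightarrow> nat \<Rightarrow> nat"
  assumes graph: "undirected_graph N E"
    and conn: "connected_graph N E"
    and D_gt: "D > 2"
    and D_ecc: "D - 1 < N" "Max {hopdist E i 0 | i. i < N} = D - 1"
    and path: "\<forall>i. i + 1 \<le> D - 1 \<longrightarrow> E i (i + 1)"
    and path_dist: "\<forall>i\<le>D - 1. hopdist E 0 i = i"
    and ss_d: "\<forall>i<N. dh 0 i = (if i = D - 1 then 0 else Min {dh 0 j + 1 | j. j \<in> nbrs E i})"
    and ss_c: "\<forall>i<N. (if i = D - 1 then c 0 i = i
                  else c 0 i \<in> nbrs E i \<and> (\<forall>j\<in>nbrs E i. dh 0 (c 0 i) + 1 \<le> dh 0 j + 1))"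
    and ss_a: "\<forall>i<N. a 0 i = (\<Sum>j\<in>{j. j < N \<and> c 0 j = i \<and> dh 0 j = dh 0 i + 1}. a 0 j) + 1"
    and ss_level: "\<forall>m. \<forall>i\<in>level N E (D - 1) m. dh 0 i = m"
    and ss_sum: "\<forall>m. (\<Sum>i\<in>level N E (D - 1) m. a 0 i) \<le> N"
    and upd_d: "\<forall>t\<ge>1. \<forall>i<N. dh t i = (if i \<in> src D t then 0
                   else Min {dh (t - 1) j + 1 | j. j \<in> nbrs E i})"
    and upd_c: "\<forall>t\<ge>1. \<forall>i<N. (if i \<in> src D t then c t i = i
                   else c t i \<in> nbrs E i \<and>
                        (\<forall>j\<in>nbrs E i. dh (t - 1) (c t i) + 1 \<le> dh (t - 1) j + 1))"
    and upd_a: "\<forall>t\<ge>1. \<forall>i<N. a t i = (\<Sum>j\<in>children N dh c t i. a (t - 1) j) + 1"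
  shows "\<forall>t\<ge>1. (\<Sum>i\<in>I0 N E t. \<Sum>j\<in>children N dh c t i \<inter> I2 N E D t. a (t - 1) j) \<le> N"
proof -
  define d0 where "d0 = (\<lambda>x. hopdist E x 0)"
  define dD where "dD = (\<lambda>x. hopdist E x (D - 1))"
  have N0: "0 < N" using D_ecc(1) by simp
  have Elt: "\<And>x y. E x y \<Longrightarrow> x < N \<and> y < N" using graph unfolding undirected_graph_def by blast
  have nbfin: "\<And>x. finite (nbrs E x)"
  proof -
    fix x have "nbrs E x \<subseteq> {..<N}" using Elt unfolding nbrs_def by auto
    then show "finite (nbrs E x)" by (rule finite_subset) simp
  qed
  have src_pos: "\<And>s. 1 \<le> s \<Longrightarrow> src D s = {0}" unfolding src_def by simp
  have dh0: "\<And>x. x < N \<Longrightarrow> dh 0 x = dD x"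
    using ss_level unfolding level_def dD_def by auto
  have src_dh: "\<And>s x. x < N \<Longrightarrow> x \<in> src D s \<Longrightarrow> dh s x = 0"
  proof -
    fix s x :: nat assume "x < N" "x \<in> src D s"
    then show "dh s x = 0" using ss_d upd_d unfolding src_def by (cases "s = 0") auto
  qed
  have stepc: "\<And>s x. x < N \<Longrightarrow> x \<notin> src D s \<Longrightarrow> c s x \<in> nbrs E x"
  proof -
    fix s x :: nat assume "x < N" "x \<notin> src D s"
    then show "c s x \<in> nbrs E x" using ss_c upd_c unfolding src_def
      by (cases "s = 0") (auto split: if_splits)
  qed
  have dh_le: "\<And>s x y. 1 \<le> s \<Longrightarrow> x < N \<Longrightarrow> x \<noteq> 0 \<Longrightarrow> E x y \<Longrightarrow> dh s x \<le> dh (s - 1) y + 1"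
  proof -
    fix s x y :: nat assume h: "1 \<le> s" "x < N" "x \<noteq> 0" "E x y"
    have "dh s x = Min ((\<lambda>j. dh (s - 1) j + 1) ` nbrs E x)"
      using upd_d h src_pos[OF h(1)] by (simp add: Setcompr_eq_image)
    also have "\<dots> \<le> dh (s - 1) y + 1"
      by (rule Min_le) (use nbfin h(4) in \<open>auto simp: nbrs_def\<close>)
    finally show "dh s x \<le> dh (s - 1) y + 1" .
  qed
  have dh_eq: "\<And>s x. 1 \<le> s \<Longrightarrow> x < N \<Longrightarrow> x \<noteq> 0 \<Longrightarrow> dh s x = dh (s - 1) (c s x) + 1 \<and> E x (c s x)"
  proof -
    fix s x :: nat assume h: "1 \<le> s" "x < N" "x \<noteq> 0"
    have cn: "c s x \<in> nbrs E x" and cm: "\<forall>j\<in>nbrs E x. dh (s - 1) (c s x) + 1 \<le> dh (s - 1) j + 1"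
    proof -
      have "x \<notin> src D s" using src_pos[OF h(1)] h(3) by simp
      then show "c s x \<in> nbrs E x" "\<forall>j\<in>nbrs E x. dh (s - 1) (c s x) + 1 \<le> dh (s - 1) j + 1"
        using upd_c[rule_format, OF h(1) h(2)] by simp_all
    qed
    have "dh s x = Min ((\<lambda>j. dh (s - 1) j + 1) ` nbrs E x)"
      using upd_d h src_pos[OF h(1)] by (simp add: Setcompr_eq_image)
    also have "\<dots> = dh (s - 1) (c s x) + 1"
    proof (rule antisym)
      show "Min ((\<lambda>j. dh (s - 1) j + 1) ` nbrs E x) \<le> dh (s - 1) (c s x) + 1"
        by (rule Min_le) (use nbfin cn in auto)
      show "dh (s - 1) (c s x) + 1 \<le> Min ((\<lambda>j. dh (s - 1) j + 1) ` nbrs E x)"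
        by (rule Min.boundedI) (use nbfin cn cm in auto)
    qed
    finally show "dh s x = dh (s - 1) (c s x) + 1 \<and> E x (c s x)" using cn by (simp add: nbrs_def)
  qed
  have d00: "d0 0 = 0" unfolding d0_def by (rule hopdist_self)
  have dDD: "dD (D - 1) = 0" unfolding dD_def by (rule hopdist_self)
  have nb0: "\<And>x y. E x y \<Longrightarrow> d0 x \<le> d0 y + 1"
    unfolding d0_def using hopdist_nbr[OF graph conn _ N0] by blast
  have nbD: "\<And>x y. E x y \<Longrightarrow> dD x \<le> dD y + 1"
    unfolding dD_def using hopdist_nbr[OF graph conn _ D_ecc(1)] by blast
  have Esym: "\<And>x y. E x y \<Longrightarrow> E y x" using graph unfolding undirected_graph_def by blast
  have L: "\<And>x. x < N \<Longrightarrow> s < d0 x \<Longrightarrow> dD x \<le> dh s x" for s :: nat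
  proof (induction s)
    case 0 then show ?case using dh0 by simp
  next
    case (Suc s)
    have x0: "x \<noteq> 0" using Suc.prems d00 by (metis not_less_zero)
    obtain y where y: "dh (Suc s) x = dh s y + 1" "E x y"
      using dh_eq[of "Suc s" x] Suc.prems x0 by auto
    have yN: "y < N" using Elt y(2) by blast
    have "s < d0 y" using nb0[OF y(2)] Suc.prems by simp
    then have "dD y \<le> dh s y" using Suc.IH yN by blast
    then show ?case using nbD[OF y(2)] y(1) by simp
  qed
  have U0: "\<And>x. x < N \<Longrightarrow> 1 \<le> s \<Longrightarrow> d0 x + 1 \<le> s \<Longrightarrow> dh s x \<le> d0 x" for s :: nat
  proof (induction s)
    case 0 then show ?case by simp
  next
    case (Suc s)
    show ?case
    proof (cases "x = 0")
      case True then show ?thesis using src_dh[of x "Suc s"] Suc.prems src_pos by simp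
    next
      case False
      then have "d0 x \<noteq> 0" using hopdist_zero[OF conn Suc.prems(1) N0] unfolding d0_def by blast
      then obtain n where n: "d0 x = Suc n" by (cases "d0 x") auto
      then obtain y where y: "E x y" "d0 y \<le> n"
        using hopdist_Suc[OF conn Suc.prems(1) N0] unfolding d0_def by blast
      have yN: "y < N" using Elt y(1) by blast
      have "dh s y \<le> d0 y" using Suc.IH[OF yN] Suc.prems n y by simp
      then show ?thesis using dh_le[of "Suc s" x y] Suc.prems False y n by simp
    qed
  qed
  have UD: "\<And>x. x < N \<Longrightarrow> s \<le> dD x \<Longrightarrow> dh s x \<le> dD x" for s :: nat
  proof (induction s)
    case 0 then show ?case using dh0 by simp
  next
    case (Suc s)
    show ?case
    proof (cases "x = 0")
      case True then show ?thesis using src_dh[of x "Suc s"] Suc.prems src_pos by simp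
    next
      case False
      obtain n where n: "dD x = Suc n" using Suc.prems by (cases "dD x") auto
      then obtain y where y: "E x y" "dD y \<le> n"
        using hopdist_Suc[OF conn Suc.prems(1) D_ecc(1)] unfolding dD_def by blast
      have yN: "y < N" using Elt y(1) by blast
      have "dD x \<le> dD y + 1" using nbD[OF y(1)] .
      then have "dh s y \<le> dD y" using Suc.IH[OF yN] Suc.prems n by simp
      then show ?thesis using dh_le[of "Suc s" x y] Suc.prems False y n by simp
    qed
  qed
  have Bd: "\<And>x. x < N \<Longrightarrow> dD x \<le> 2 * D"
  proof -
    fix x assume x: "x < N"
    have w1: "walk E x 0 (d0 x)" unfolding d0_def by (rule walk_hopdist[OF conn x N0])
    have w2: "walk E 0 (D - 1) (D - 1)" unfolding walk_def
      by (rule exI[of _ "\<lambda>k. k"]) (use path in auto)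
    have "dD x \<le> d0 x + (D - 1)" unfolding dD_def by (rule hopdist_le[OF walk_concat[OF w1 w2]])
    moreover have "d0 x \<le> D - 1"
    proof -
      have "{hopdist E i 0 | i. i < N} = (\<lambda>i. hopdist E i 0) ` {..<N}" by auto
      then have "finite {hopdist E i 0 | i. i < N}" by simp
      then have "d0 x \<le> Max {hopdist E i 0 | i. i < N}" unfolding d0_def
        by (rule Max_ge) (use x in auto)
      then show ?thesis using D_ecc(2) by simp
    qed
    ultimately show "dD x \<le> 2 * D" by simp
  qed
  have Q0: "\<forall>d X. 2 * D + 1 - d = m \<longrightarrow> X \<subseteq> {k. k < N \<and> dD k = d \<and> dh 0 k = d} \<longrightarrow>
        sum (a 0) X \<le> card {k. k < N \<and> d \<le> dD k}" for m :: nat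
  proof (induction m)
    case 0
    show ?case
    proof (intro allI impI)
      fix d X assume h: "2 * D + 1 - d = 0" "X \<subseteq> {k. k < N \<and> dD k = d \<and> dh 0 k = d}"
      have "X = {}" using h Bd by fastforce
      then show "sum (a 0) X \<le> card {k. k < N \<and> d \<le> dD k}" by simp
    qed
  next
    case (Suc m)
    show ?case
    proof (intro allI impI)
      fix d X assume h: "2 * D + 1 - d = Suc m" "X \<subseteq> {k. k < N \<and> dD k = d \<and> dh 0 k = d}"
      have fX: "finite X" using h(2) by (rule finite_subset) auto
      let ?Y = "\<Union>k\<in>X. {j. j < N \<and> c 0 j = k \<and> dh 0 j = dh 0 k + 1}"
      have "sum (a 0) X = card X + sum (a 0) ?Y"
        by (rule sum_children[OF fX]) (use ss_a h(2) in auto)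
      also have "sum (a 0) ?Y \<le> card {k. k < N \<and> Suc d \<le> dD k}"
      proof -
        have "?Y \<subseteq> {k. k < N \<and> dD k = Suc d \<and> dh 0 k = Suc d}" using h(2) dh0 by auto
        moreover have "2 * D + 1 - Suc d = m" using h(1) by simp
        ultimately show ?thesis using Suc.IH by blast
      qed
      also have "card X + card {k. k < N \<and> Suc d \<le> dD k} \<le> card {k. k < N \<and> d \<le> dD k}"
        by (rule card_step) (use h(2) in auto)
      finally show "sum (a 0) X \<le> card {k. k < N \<and> d \<le> dD k}" by simp
    qed
  qed
  have Q: "\<And>d X. X \<subseteq> {k. k < N \<and> dD k = d \<and> dh s k = d} \<Longrightarrow> s \<le> d \<Longrightarrow>
        sum (a s) X \<le> card {k. k < N \<and> d \<le> dD k}" for s :: nat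
  proof (induction s)
    case 0 then show ?case using Q0 by blast
  next
    case (Suc s)
    have fX: "finite X" using Suc.prems(1) by (rule finite_subset) auto
    let ?Y = "\<Union>k\<in>X. {j. j < N \<and> c s j = k \<and> dh s j = dh (Suc s) k + 1}"
    have "sum (a (Suc s)) X = card X + sum (a s) ?Y"
      by (rule sum_children[OF fX]) (use upd_a Suc.prems(1) in \<open>auto simp: children_def\<close>)
    also have "sum (a s) ?Y \<le> card {k. k < N \<and> Suc d \<le> dD k}"
    proof -
      have "?Y \<subseteq> {k. k < N \<and> dD k = Suc d \<and> dh s k = Suc d}"
      proof
        fix j assume "j \<in> ?Y"
        then obtain k where k: "k \<in> X" "j < N" "c s j = k" "dh s j = dh (Suc s) k + 1" by blast
        have kp: "k < N" "dD k = d" "dh (Suc s) k = d" using k(1) Suc.prems(1) by auto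
        have jns: "j \<notin> src D s"
        proof
          assume "j \<in> src D s"
          then have "dh s j = 0" using src_dh k(2) by blast
          then show False using k(4) by simp
        qed
        have "E j k" using stepc[OF k(2) jns] k(3) by (simp add: nbrs_def)
        then have e1: "dD j \<le> Suc d" and e2: "d \<le> dD j + 1" using nbD Esym kp by fastforce+
        have "dh s j \<le> dD j" using UD[OF k(2)] e2 Suc.prems(2) by simp
        then have "dD j = Suc d" using e1 k(4) kp by simp
        then show "j \<in> {k. k < N \<and> dD k = Suc d \<and> dh s k = Suc d}" using k kp by simp
      qed
      then show ?thesis using Suc.IH Suc.prems(2) by simp
    qed
    also have "card X + card {k. k < N \<and> Suc d \<le> dD k} \<le> card {k. k < N \<and> d \<le> dD k}"
      by (rule card_step) (use Suc.prems(1) in auto)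
    finally show ?case by simp
  qed
  show ?thesis
  proof (intro allI impI)
    fix t :: nat assume t: "1 \<le> t"
    have I0e: "I0 N E t = {i. i < N \<and> d0 i < t}" unfolding I0_def level_def d0_def by auto
    have I2e: "\<And>j. j < N \<Longrightarrow> j \<in> I2 N E D t \<Longrightarrow> t \<le> d0 j \<and> t \<le> dD j"
      unfolding I2_def I1_def I0_def level_def d0_def dD_def by auto
    have fI0: "finite (I0 N E t)" unfolding I0e by simp
    let ?P = "\<lambda>i j. dh (t - 1) j = dh t i + 1 \<and> j \<in> I2 N E D t"
    have "(\<Sum>i\<in>I0 N E t. \<Sum>j\<in>children N dh c t i \<inter> I2 N E D t. a (t - 1) j)
        = (\<Sum>i\<in>I0 N E t. \<Sum>j\<in>{j. j < N \<and> c (t - 1) j = i \<and> ?P i j}. a (t - 1) j)"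
      unfolding children_def by (intro sum.cong refl) auto
    also have "\<dots> = sum (a (t - 1)) (\<Union>i\<in>I0 N E t. {j. j < N \<and> c (t - 1) j = i \<and> ?P i j})"
      by (rule sum_UN_children[OF fI0])
    also have "\<dots> \<le> card {k. k < N \<and> t \<le> dD k}"
    proof (rule Q)
      show "t - 1 \<le> t" by simp
      show "(\<Union>i\<in>I0 N E t. {j. j < N \<and> c (t - 1) j = i \<and> ?P i j})
            \<subseteq> {k. k < N \<and> dD k = t \<and> dh (t - 1) k = t}"
      proof
        fix j assume "j \<in> (\<Union>i\<in>I0 N E t. {j. j < N \<and> c (t - 1) j = i \<and> ?P i j})"
        then obtain i where i: "i < N" "d0 i < t" "j < N" "dh (t - 1) j = dh t i + 1" "j \<in> I2 N E D t"
          unfolding I0e by blast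
        have "dh t i \<le> d0 i" using U0[OF i(1) t] i(2) by simp
        then have u: "dh (t - 1) j \<le> t" using i by simp
        have jj: "t \<le> d0 j" "t \<le> dD j" using I2e[OF i(3) i(5)] by auto
        have "dD j \<le> dh (t - 1) j" using L[OF i(3)] jj t by simp
        then show "j \<in> {k. k < N \<and> dD k = t \<and> dh (t - 1) k = t}" using u jj i(3) by simp
      qed
    qed
    also have "\<dots> \<le> N"
    proof -
      have "card {k. k < N \<and> t \<le> dD k} \<le> card {..<N}" by (rule card_mono) auto
      then show ?thesis by simp
    qed
    finally show "(\<Sum>i\<in>I0 N E t. \<Sum>j\<in>children N dh c t i \<inter> I2 N E D t. a (t - 1) j) \<le> N" .
  qed
qed

end
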